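(* Let $m\ge2$, $n\ge2$. For every $\epsilon\in(0,1)$ there is a $(1-\epsilon)$-cyclic-envy-free mechanism $(A,p)$ for the job scheduling problem over the general instances $\mathcal{C}=\mathbb{R}_{\ge0}^{m\times n}$ such that $\max_{i\in[m]}c_i(A(c)_i)\le\frac1\epsilon\,\mathrm{OPT}(c)$ for every $c\in\mathcal{C}$.
   Context: Machines $[m]$, jobs $[n]$; instance $c\in\mathbb{R}_{\ge0}^{m\times n}$, $c_i(S)=\sum_{j\in S}c_{i,j}$. An allocation is a tuple of pairwise disjoint subsets of $[n]$ with union $[n]$. A mechanism $(A,p)$ assigns to each instance an allocation $A(c)=(A_1,\dots,A_m)$ and payments $p(c)\in\mathbb{R}^m$. For $\alpha\in(0,1]$, $(A,p)$ is $\alpha$-cyclic-envy-free if for every instance $c$ and every $i\in[m]$: $\alpha\,c_i(A_i)-p_i\le c_i(A_{i-1})-p_{i-1}$, with the convention $A_0=A_m$, $p_0=p_m$. $\mathrm{OPT}(c)=\min_X\max_{i\in[m]}c_i(X_i)$ over all allocations $X$. *)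

theory Defs
  imports Complex_Main
begin

(* Machines are 1..m, jobs are 1..n. An valid_instance is c :: nat => nat => real,
   c i j = cost of job j on machine i; only entries on {1..m} x {1..n} matter. *)

definition valid_instance :: "nat \<Rightarrow> nat \<Rightarrow> (nat \<Rightarrow> nat \<Rightarrow> real) \<Rightarrow> bool" where
  "valid_instance m n c \<longleftrightarrow> (\<forall>i\<in>{1..m}. \<forall>j\<in>{1..n}. c i j \<ge> 0)"

definition cost :: "(nat \<Rightarrow> nat \<Rightarrow> real) \<Rightarrow> nat \<Rightarrow> nat set \<Rightarrow> real" where
  "cost c i S = (\<Sum>j\<in>S. c i j)"

definition is_allocation :: "nat \<Rightarrow> nat \<Rightarrow> (nat \<Rightarrow> nat set) \<Rightarrow> bool" where
  "is_allocation m n X \<longleftrightarrow>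
     (\<forall>i\<in>{1..m}. \<forall>k\<in>{1..m}. i \<noteq> k \<longrightarrow> X i \<inter> X k = {}) \<and>
     (\<Union>i\<in>{1..m}. X i) = {1..n}"

definition makespan :: "nat \<Rightarrow> (nat \<Rightarrow> nat \<Rightarrow> real) \<Rightarrow> (nat \<Rightarrow> nat set) \<Rightarrow> real" where
  "makespan m c X = Max ((\<lambda>i. cost c i (X i)) ` {1..m})"

definition OPT :: "nat \<Rightarrow> nat \<Rightarrow> (nat \<Rightarrow> nat \<Rightarrow> real) \<Rightarrow> real" where
  "OPT m n c = Inf ((\<lambda>X. makespan m c X) ` {X. is_allocation m n X})"

definition pred_machine :: "nat \<Rightarrow> nat \<Rightarrow> nat" where
  "pred_machine m i = (if i = 1 then m else i - 1)"

(* A mechanism: for each valid_instance an allocation A c and payments p c.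
   It must be a function of the valid_instance, i.e. of the entries on {1..m} x {1..n}. *)
definition is_mechanism :: "nat \<Rightarrow> nat \<Rightarrow> ((nat \<Rightarrow> nat \<Rightarrow> real) \<Rightarrow> nat \<Rightarrow> nat set)
    \<Rightarrow> ((nat \<Rightarrow> nat \<Rightarrow> real) \<Rightarrow> nat \<Rightarrow> real) \<Rightarrow> bool" where
  "is_mechanism m n A p \<longleftrightarrow>
     (\<forall>c. valid_instance m n c \<longrightarrow> is_allocation m n (A c)) \<and>
     (\<forall>c c'. valid_instance m n c \<longrightarrow> valid_instance m n c' \<longrightarrow>
        (\<forall>i\<in>{1..m}. \<forall>j\<in>{1..n}. c i j = c' i j) \<longrightarrow>
        (\<forall>i\<in>{1..m}. A c i = A c' i \<and> p c i = p c' i))"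

definition cyclic_envy_free :: "nat \<Rightarrow> nat \<Rightarrow> real \<Rightarrow> ((nat \<Rightarrow> nat \<Rightarrow> real) \<Rightarrow> nat \<Rightarrow> nat set)
    \<Rightarrow> ((nat \<Rightarrow> nat \<Rightarrow> real) \<Rightarrow> nat \<Rightarrow> real) \<Rightarrow> bool" where
  "cyclic_envy_free m n \<alpha> A p \<longleftrightarrow>
     (\<forall>c. valid_instance m n c \<longrightarrow> (\<forall>i\<in>{1..m}.
        \<alpha> * cost c i (A c i) - p c i
          \<le> cost c i (A c (pred_machine m i)) - p c (pred_machine m i)))"

end

theory Submission imports Defs "HOL-Library.FuncSet" "HOL-Number_Theory.Cong" begin


definition sh :: "nat \<Rightarrow> nat \<Rightarrow> nat \<Rightarrow> nat" where
  "sh m k a = (a - 1 + k) mod m + 1"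

lemma sh_range: "m \<ge> 1 \<Longrightarrow> sh m k a \<in> {1..m}"
proof -
  assume "m \<ge> 1"
  hence "(a - 1 + k) mod m < m" by simp
  thus ?thesis unfolding sh_def by (simp only: atLeastAtMost_iff) linarith
qed

lemma sh_Suc_pred: "m \<ge> 1 \<Longrightarrow> pred_machine m (sh m (Suc k) a) = sh m k a"
proof -
  assume m: "m \<ge> 1"
  define r where "r = (a - 1 + k) mod m"
  have rl: "r < m" using m unfolding r_def by simp
  have "sh m (Suc k) a = (if Suc r = m then 0 else Suc r) + 1"
    unfolding sh_def r_def by (simp add: mod_Suc)
  then show ?thesis using rl unfolding pred_machine_def sh_def r_def[symmetric] by auto
qed

lemma sh_m: "a \<in> {1..m} \<Longrightarrow> sh m m a = a"
proof -
  assume a: "a \<in> {1..m}"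
  have "(a - 1 + m) mod m = (a-1) mod m" by (rule mod_add_self2)
  also have "\<dots> = a - 1" using a by auto
  finally have e0: "(a - 1 + m) mod m = a - 1" .
  have e: "(a - 1 + m) mod m + 1 = a" using a e0 by (simp only: atLeastAtMost_iff) linarith
  show ?thesis unfolding sh_def by (rule e)
qed

lemma sh_0: "a \<in> {1..m} \<Longrightarrow> sh m 0 a = a"
  unfolding sh_def by auto

lemma sh_inj: "a \<in> {1..m} \<Longrightarrow> b \<in> {1..m} \<Longrightarrow> sh m k a = sh m k b \<Longrightarrow> a = b"
proof -
  assume a: "a \<in> {1..m}" and b: "b \<in> {1..m}" and e: "sh m k a = sh m k b"
  have "(a - 1 + k) mod m = (b - 1 + k) mod m" using e unfolding sh_def by simp
  hence "(a - 1) mod m = (b - 1) mod m"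
    using cong_add_rcancel_nat[of "a-1" k "b-1" m] unfolding cong_def by simp
  thus ?thesis using a b by auto
qed

lemma pred_range: "m \<ge> 1 \<Longrightarrow> i \<in> {1..m} \<Longrightarrow> pred_machine m i \<in> {1..m}"
  unfolding pred_machine_def by auto

lemma pred_inj: "x \<in> {1..m} \<Longrightarrow> y \<in> {1..m} \<Longrightarrow> pred_machine m x = pred_machine m y \<Longrightarrow> x = y"
  unfolding pred_machine_def by (auto split: if_splits)

lemma exists_good_k:
  fixes c :: "nat \<Rightarrow> nat \<Rightarrow> real" and \<alpha> :: real
  assumes m: "m \<ge> 1" and a: "a \<in> {1..m}" and nn: "\<forall>i\<in>{1..m}. c i j \<ge> 0"
    and al: "0 \<le> \<alpha>" "\<alpha> \<le> 1"
  shows "\<exists>k<m. \<alpha> * c (sh m k a) j \<le> c (sh m (Suc k) a) j"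
proof (rule ccontr)
  assume "\<not> ?thesis"
  hence f: "\<And>k. k < m \<Longrightarrow> c (sh m (Suc k) a) j < \<alpha> * c (sh m k a) j" by force
  have P: "k \<le> m \<Longrightarrow> c (sh m k a) j \<le> \<alpha>^k * c a j" for k
  proof (induction k)
    case 0 then show ?case using a by (simp add: sh_0)
  next
    case (Suc k)
    have "c (sh m (Suc k) a) j < \<alpha> * c (sh m k a) j" using f Suc by simp
    also have "\<dots> \<le> \<alpha> * (\<alpha>^k * c a j)" using Suc al by (simp add: mult_left_mono)
    finally show ?case by simp
  qed
  have "c (sh m (Suc (m-1)) a) j < \<alpha> * c (sh m (m-1) a) j" using f[of "m-1"] m by simp
  also have "\<dots> \<le> \<alpha> * (\<alpha>^(m-1) * c a j)" using P[of "m-1"] al by (simp add: mult_left_mono)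
  also have "\<dots> = \<alpha>^m * c a j" using m by (simp add: power_eq_if)
  also have "\<dots> \<le> 1 * c a j" using nn a al by (intro mult_right_mono power_le_one) auto
  finally show False using m a by (simp add: sh_m)
qed



definition GG :: "nat \<Rightarrow> nat \<Rightarrow> (nat \<Rightarrow> nat) set" where
  "GG m n = {1..n} \<rightarrow>\<^sub>E {1..m}"

definition alloc :: "nat \<Rightarrow> (nat \<Rightarrow> nat) \<Rightarrow> nat \<Rightarrow> nat set" where
  "alloc n g = (\<lambda>a. {j\<in>{1..n}. g j = a})"

definition g0 :: "nat \<Rightarrow> nat \<Rightarrow> (nat \<Rightarrow> nat \<Rightarrow> real) \<Rightarrow> nat \<Rightarrow> nat" where
  "g0 m n c = (SOME g. g \<in> GG m n \<and> (\<forall>g'\<in>GG m n. makespan m c (alloc n g) \<le> makespan m c (alloc n g')))"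

definition kk :: "nat \<Rightarrow> real \<Rightarrow> (nat \<Rightarrow> nat \<Rightarrow> real) \<Rightarrow> (nat \<Rightarrow> nat) \<Rightarrow> nat \<Rightarrow> nat" where
  "kk m \<alpha> c g j = (LEAST k. \<alpha> * c (sh m k (g j)) j \<le> c (sh m (Suc k) (g j)) j)"

definition hh :: "nat \<Rightarrow> real \<Rightarrow> (nat \<Rightarrow> nat \<Rightarrow> real) \<Rightarrow> (nat \<Rightarrow> nat) \<Rightarrow> nat \<Rightarrow> nat" where
  "hh m \<alpha> c g j = sh m (kk m \<alpha> c g j) (g j)"

definition Al :: "nat \<Rightarrow> nat \<Rightarrow> real \<Rightarrow> (nat \<Rightarrow> nat \<Rightarrow> real) \<Rightarrow> (nat \<Rightarrow> nat) \<Rightarrow> nat \<Rightarrow> nat set" where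
  "Al m n \<alpha> c g = (\<lambda>a. {j\<in>{1..n}. hh m \<alpha> c g j = a})"

lemma GG_finite: "finite (GG m n)"
  unfolding GG_def by (simp add: finite_PiE)

lemma GG_ne: "m \<ge> 1 \<Longrightarrow> (\<lambda>j\<in>{1..n}. 1) \<in> GG m n"
  unfolding GG_def by auto

lemma GG_range: "g \<in> GG m n \<Longrightarrow> j \<in> {1..n} \<Longrightarrow> g j \<in> {1..m}"
  unfolding GG_def by auto

lemma g0_prop:
  assumes "m \<ge> 1"
  shows "g0 m n c \<in> GG m n \<and> (\<forall>g'\<in>GG m n. makespan m c (alloc n (g0 m n c)) \<le> makespan m c (alloc n g'))"
proof -
  define S where "S = (\<lambda>g. makespan m c (alloc n g)) ` GG m n"
  have fS: "finite S" unfolding S_def using GG_finite by simp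
  have nS: "S \<noteq> {}" unfolding S_def using GG_ne[OF assms] by blast
  have "Min S \<in> S" using fS nS by simp
  then obtain g where g: "g \<in> GG m n" "makespan m c (alloc n g) = Min S" unfolding S_def by auto
  have "\<forall>g'\<in>GG m n. makespan m c (alloc n g) \<le> makespan m c (alloc n g')"
    using g fS unfolding S_def by auto
  hence "\<exists>g. g \<in> GG m n \<and> (\<forall>g'\<in>GG m n. makespan m c (alloc n g) \<le> makespan m c (alloc n g'))"
    using g by blast
  thus ?thesis unfolding g0_def by (rule someI_ex)
qed

lemma makespan_cong:
  "(\<And>a. a \<in> {1..m} \<Longrightarrow> cost c a (X a) = cost c' a (Y a)) \<Longrightarrow> makespan m c X = makespan m c' Y"
  unfolding makespan_def by (metis (no_types, lifting) image_cong)

lemma alloc_repr: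
  assumes X: "is_allocation m n X"
  shows "\<exists>g\<in>GG m n. \<forall>a\<in>{1..m}. alloc n g a = X a"
proof -
  define g where "g = (\<lambda>j\<in>{1..n}. SOME i. i \<in> {1..m} \<and> j \<in> X i)"
  have disj: "\<And>i k. i\<in>{1..m} \<Longrightarrow> k\<in>{1..m} \<Longrightarrow> i \<noteq> k \<Longrightarrow> X i \<inter> X k = {}"
    and un: "(\<Union>i\<in>{1..m}. X i) = {1..n}" using X unfolding is_allocation_def by auto
  have gj: "g j \<in> {1..m} \<and> j \<in> X (g j)" if "j \<in> {1..n}" for j
  proof -
    have "\<exists>i. i \<in> {1..m} \<and> j \<in> X i" using un that by blast
    hence "(SOME i. i \<in> {1..m} \<and> j \<in> X i) \<in> {1..m} \<and> j \<in> X (SOME i. i \<in> {1..m} \<and> j \<in> X i)"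
      by (rule someI_ex)
    thus ?thesis unfolding g_def using that by simp
  qed
  have "g \<in> GG m n" unfolding GG_def g_def using gj[unfolded g_def] by auto
  moreover have "alloc n g a = X a" if a: "a \<in> {1..m}" for a
  proof
    show "alloc n g a \<subseteq> X a" unfolding alloc_def using gj by auto
    show "X a \<subseteq> alloc n g a"
    proof
      fix j assume j: "j \<in> X a"
      have jn: "j \<in> {1..n}" using un a j by blast
      have "g j = a" using gj[OF jn] disj[of "g j" a] a j by blast
      thus "j \<in> alloc n g a" unfolding alloc_def using jn by simp
    qed
  qed
  ultimately show ?thesis by blast
qed

lemma makespan_ge:
  "a \<in> {1..m} \<Longrightarrow> cost c a (X a) \<le> makespan m c X"
  unfolding makespan_def by (rule Max_ge) auto

lemma g0_opt:
  assumes "m \<ge> 1" "is_allocation m n X"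
  shows "makespan m c (alloc n (g0 m n c)) \<le> makespan m c X"
proof -
  obtain g where g: "g \<in> GG m n" "\<forall>a\<in>{1..m}. alloc n g a = X a" using alloc_repr[OF assms(2)] by blast
  have "makespan m c (alloc n g) = makespan m c X" by (rule makespan_cong) (use g in simp)
  thus ?thesis using g0_prop[OF assms(1)] g(1) by metis
qed

context
  fixes m n :: nat and \<alpha> :: real and c :: "nat \<Rightarrow> nat \<Rightarrow> real" and g :: "nat \<Rightarrow> nat"
  assumes m: "m \<ge> 1" and al: "0 \<le> \<alpha>" "\<alpha> \<le> 1"
    and nn: "\<forall>i\<in>{1..m}. \<forall>j\<in>{1..n}. c i j \<ge> 0" and g: "g \<in> GG m n"
begin

lemma kk_props:
  assumes j: "j \<in> {1..n}"
  shows "kk m \<alpha> c g j < m"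
    "\<alpha> * c (hh m \<alpha> c g j) j \<le> c (sh m (Suc (kk m \<alpha> c g j)) (g j)) j"
    "c (hh m \<alpha> c g j) j \<le> \<alpha> ^ kk m \<alpha> c g j * c (g j) j"
proof -
  let ?P = "\<lambda>k. \<alpha> * c (sh m k (g j)) j \<le> c (sh m (Suc k) (g j)) j"
  have gj: "g j \<in> {1..m}" using GG_range[OF g j] .
  obtain k0 where k0: "k0 < m" "?P k0"
    using exists_good_k[OF m gj _ al] nn j by blast
  have le: "kk m \<alpha> c g j \<le> k0" unfolding kk_def by (rule Least_le) (rule k0(2))
  thus "kk m \<alpha> c g j < m" using k0 by simp
  show "\<alpha> * c (hh m \<alpha> c g j) j \<le> c (sh m (Suc (kk m \<alpha> c g j)) (g j)) j"
    unfolding hh_def kk_def by (rule LeastI) (rule k0(2))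
  have nl: "\<not> ?P l" if "l < kk m \<alpha> c g j" for l
    using not_less_Least[OF that[unfolded kk_def]] .
  have "l \<le> kk m \<alpha> c g j \<Longrightarrow> c (sh m l (g j)) j \<le> \<alpha> ^ l * c (g j) j" for l
  proof (induction l)
    case 0 then show ?case using gj by (simp add: sh_0)
  next
    case (Suc l)
    have "c (sh m (Suc l) (g j)) j < \<alpha> * c (sh m l (g j)) j" using nl[of l] Suc by simp
    also have "\<dots> \<le> \<alpha> * (\<alpha>^l * c (g j) j)" using Suc al by (simp add: mult_left_mono)
    finally show ?case by simp
  qed
  thus "c (hh m \<alpha> c g j) j \<le> \<alpha> ^ kk m \<alpha> c g j * c (g j) j" unfolding hh_def by simp
qed

lemma hh_range: "hh m \<alpha> c g j \<in> {1..m}"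
  unfolding hh_def using sh_range[OF m] .

lemma Al_alloc: "is_allocation m n (Al m n \<alpha> c g)"
  unfolding is_allocation_def Al_def using hh_range by auto

lemma Al_sub: "Al m n \<alpha> c g a \<subseteq> {1..n}"
  unfolding Al_def by auto

lemma envy_job:
  assumes i: "i \<in> {1..m}" and j: "j \<in> Al m n \<alpha> c g (pred_machine m i)"
  shows "\<alpha> * c (pred_machine m i) j \<le> c i j"
proof -
  have jn: "j \<in> {1..n}" and h: "hh m \<alpha> c g j = pred_machine m i" using j unfolding Al_def by auto
  let ?k = "kk m \<alpha> c g j"
  have "pred_machine m (sh m (Suc ?k) (g j)) = pred_machine m i"
    using h sh_Suc_pred[OF m] unfolding hh_def by simp
  hence "sh m (Suc ?k) (g j) = i" using pred_inj sh_range[OF m] i by blast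
  thus ?thesis using kk_props(2)[OF jn] h by simp
qed

lemma makespan_nonneg: "0 \<le> makespan m c (alloc n g)"
proof -
  have "0 \<le> cost c 1 (alloc n g 1)" unfolding cost_def alloc_def
    using nn m by (intro sum_nonneg) auto
  also have "\<dots> \<le> makespan m c (alloc n g)" using m by (intro makespan_ge) auto
  finally show ?thesis .
qed

lemma machine_bound:
  assumes i: "i \<in> {1..m}"
  shows "cost c i (Al m n \<alpha> c g i) \<le> (\<Sum>k<m. \<alpha>^k) * makespan m c (alloc n g)"
proof -
  let ?M = "makespan m c (alloc n g)"
  let ?S = "Al m n \<alpha> c g i"
  have fS: "finite ?S" using Al_sub finite_subset by blast
  have "cost c i ?S = (\<Sum>k<m. \<Sum>j\<in>{j\<in>?S. kk m \<alpha> c g j = k}. c i j)"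
    unfolding cost_def
    by (rule sum.group[symmetric]) (use fS kk_props(1) Al_sub in blast)+
  also have "\<dots> \<le> (\<Sum>k<m. \<alpha>^k * ?M)"
  proof (rule sum_mono)
    fix k assume "k \<in> {..<m}"
    define J where "J = {j\<in>?S. kk m \<alpha> c g j = k}"
    have "(\<Sum>j\<in>J. c i j) \<le> \<alpha>^k * ?M"
    proof (cases "J = {}")
      case True then show ?thesis using makespan_nonneg al by simp
    next
      case False
      then obtain j0 where j0: "j0 \<in> J" by blast
      define a where "a = g j0"
      have Jn: "J \<subseteq> {1..n}" unfolding J_def using Al_sub by auto
      have fJ: "finite J" using Jn finite_subset by blast
      have a: "a \<in> {1..m}" unfolding a_def using GG_range[OF g] Jn j0 by auto
      have gJ: "g j = a" and ci: "c i j \<le> \<alpha>^k * c a j" if "j \<in> J" for j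
      proof -
        have jn: "j \<in> {1..n}" using Jn that by auto
        have hj: "hh m \<alpha> c g j = i" "kk m \<alpha> c g j = k" using that unfolding J_def Al_def by auto
        have hj0: "hh m \<alpha> c g j0 = i" "kk m \<alpha> c g j0 = k" using j0 unfolding J_def Al_def by auto
        have "sh m k (g j) = sh m k (g j0)" using hj hj0 unfolding hh_def by simp
        thus "g j = a" unfolding a_def
          using sh_inj GG_range[OF g jn] GG_range[OF g] Jn j0 by blast
        thus "c i j \<le> \<alpha>^k * c a j" using kk_props(3)[OF jn] hj by simp
      qed
      have "(\<Sum>j\<in>J. c i j) \<le> (\<Sum>j\<in>J. \<alpha>^k * c a j)" using ci by (rule sum_mono)
      also have "\<dots> = \<alpha>^k * (\<Sum>j\<in>J. c a j)" by (simp add: sum_distrib_left)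
      also have "(\<Sum>j\<in>J. c a j) \<le> (\<Sum>j\<in>alloc n g a. c a j)"
        using gJ Jn nn a by (intro sum_mono2) (auto simp: alloc_def)
      also have "(\<Sum>j\<in>alloc n g a. c a j) \<le> ?M"
        using makespan_ge[OF a, of c "alloc n g"] unfolding cost_def .
      finally show ?thesis using al by (simp add: mult_left_mono)
    qed
    thus "(\<Sum>j\<in>{j\<in>?S. kk m \<alpha> c g j = k}. c i j) \<le> \<alpha>^k * ?M" unfolding J_def .
  qed
  also have "\<dots> = (\<Sum>k<m. \<alpha>^k) * ?M" by (simp add: sum_distrib_right)
  finally show ?thesis .
qed

end



lemma pay_lemma:
  fixes d :: "nat \<Rightarrow> real"
  assumes m: "m \<ge> 1" and s: "(\<Sum>k=1..m. d k) \<ge> 0" and i: "i \<in> {1..m}"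
  shows "(- (\<Sum>k=1..pred_machine m i. d k)) - (- (\<Sum>k=1..i. d k)) \<le> d i"
proof (cases "i = 1")
  case True
  then show ?thesis using s by (simp add: pred_machine_def)
next
  case False
  then obtain l where l: "i = Suc l" "l \<ge> 1" using i by (cases i) auto
  have "(\<Sum>k=1..i. d k) = (\<Sum>k=1..l. d k) + d i" using l by (simp add: sum.cl_ivl_Suc)
  moreover have "pred_machine m i = l" using l unfolding pred_machine_def by simp
  ultimately show ?thesis by simp
qed

lemma pred_reindex:
  fixes f :: "nat \<Rightarrow> real"
  assumes m: "m \<ge> 1"
  shows "(\<Sum>i\<in>{1..m}. f (pred_machine m i)) = (\<Sum>i\<in>{1..m}. f i)"
proof -
  have inj: "inj_on (pred_machine m) {1..m}" using pred_inj by (meson inj_onI)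
  have img: "pred_machine m ` {1..m} = {1..m}"
    by (rule endo_inj_surj) (use inj pred_range[OF m] in auto)
  have "(\<Sum>i\<in>{1..m}. f i) = (\<Sum>i\<in>pred_machine m ` {1..m}. f i)" using img by simp
  also have "\<dots> = (\<Sum>i\<in>{1..m}. f (pred_machine m i))" using sum.reindex[OF inj] by simp
  finally show ?thesis by simp
qed

definition P0 :: "nat \<Rightarrow> nat \<Rightarrow> real \<Rightarrow> (nat \<Rightarrow> nat \<Rightarrow> real) \<Rightarrow> nat \<Rightarrow> real" where
  "P0 m n \<alpha> c = (\<lambda>i. - (\<Sum>k=1..i. cost c k (Al m n \<alpha> c (g0 m n c) (pred_machine m k))
                              - \<alpha> * cost c k (Al m n \<alpha> c (g0 m n c) k)))"

lemma envy_main: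
  fixes m n :: nat and \<alpha> :: real and c :: "nat \<Rightarrow> nat \<Rightarrow> real"
  assumes m: "m \<ge> 1" and al: "0 \<le> \<alpha>" "\<alpha> \<le> 1"
    and nn: "\<forall>i\<in>{1..m}. \<forall>j\<in>{1..n}. c i j \<ge> 0" and i: "i \<in> {1..m}"
  shows "\<alpha> * cost c i (Al m n \<alpha> c (g0 m n c) i) - P0 m n \<alpha> c i
     \<le> cost c i (Al m n \<alpha> c (g0 m n c) (pred_machine m i)) - P0 m n \<alpha> c (pred_machine m i)"
proof -
  let ?A = "Al m n \<alpha> c (g0 m n c)"
  define d where "d k = cost c k (?A (pred_machine m k)) - \<alpha> * cost c k (?A k)" for k
  have g: "g0 m n c \<in> GG m n" using g0_prop[OF m] by blast
  have t: "\<alpha> * cost c (pred_machine m k) (?A (pred_machine m k)) \<le> cost c k (?A (pred_machine m k))"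
    if k: "k \<in> {1..m}" for k
  proof -
    have "\<alpha> * cost c (pred_machine m k) (?A (pred_machine m k))
        = (\<Sum>j\<in>?A (pred_machine m k). \<alpha> * c (pred_machine m k) j)"
      unfolding cost_def by (simp add: sum_distrib_left)
    also have "\<dots> \<le> cost c k (?A (pred_machine m k))" unfolding cost_def
      by (rule sum_mono) (rule envy_job[OF m al nn g k])
    finally show ?thesis .
  qed
  have "\<alpha> * (\<Sum>k=1..m. cost c k (?A k)) = \<alpha> * (\<Sum>k=1..m. cost c (pred_machine m k) (?A (pred_machine m k)))"
    using pred_reindex[OF m, of "\<lambda>k. cost c k (?A k)"] by simp
  also have "\<dots> = (\<Sum>k=1..m. \<alpha> * cost c (pred_machine m k) (?A (pred_machine m k)))"
    by (simp add: sum_distrib_left)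
  also have "\<dots> \<le> (\<Sum>k=1..m. cost c k (?A (pred_machine m k)))" using t by (rule sum_mono)
  finally have "(\<Sum>k=1..m. d k) \<ge> 0" unfolding d_def
    by (simp add: sum_subtractf sum_distrib_left)
  from pay_lemma[OF m this i] show ?thesis unfolding P0_def d_def by simp
qed



definition RR :: "nat \<Rightarrow> nat \<Rightarrow> (nat \<Rightarrow> nat \<Rightarrow> real) \<Rightarrow> nat \<Rightarrow> nat \<Rightarrow> real" where
  "RR m n c = (\<lambda>i j. if i \<in> {1..m} \<and> j \<in> {1..n} then c i j else 0)"

lemma RR_cost: "i \<in> {1..m} \<Longrightarrow> S \<subseteq> {1..n} \<Longrightarrow> cost (RR m n c) i S = cost c i S"
  unfolding cost_def RR_def by (rule sum.cong) auto

lemma RR_nn: "valid_instance m n c \<Longrightarrow> \<forall>i\<in>{1..m}. \<forall>j\<in>{1..n}. RR m n c i j \<ge> 0"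
  unfolding valid_instance_def RR_def by auto

lemma alloc_sub: "is_allocation m n X \<Longrightarrow> a \<in> {1..m} \<Longrightarrow> X a \<subseteq> {1..n}"
  unfolding is_allocation_def by auto

theorem mainTheorem12:
  fixes m n :: nat and \<epsilon> :: real
  assumes "m \<ge> 2" and "n \<ge> 2" and "0 < \<epsilon>" and "\<epsilon> < 1"
  shows "\<exists>A p. is_mechanism m n A p \<and> cyclic_envy_free m n (1 - \<epsilon>) A p \<and>
           (\<forall>c. valid_instance m n c \<longrightarrow> makespan m c (A c) \<le> (1 / \<epsilon>) * OPT m n c)"
proof -
  define \<alpha> where "\<alpha> = 1 - \<epsilon>"
  have m: "m \<ge> 1" using assms by simp
  have al: "0 \<le> \<alpha>" "\<alpha> \<le> 1" using assms unfolding \<alpha>_def by auto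
  define A where "A = (\<lambda>c. Al m n \<alpha> (RR m n c) (g0 m n (RR m n c)))"
  define p where "p = (\<lambda>c. P0 m n \<alpha> (RR m n c))"
  have Asub: "A c a \<subseteq> {1..n}" for c a unfolding A_def Al_def by auto
  have mech: "is_mechanism m n A p"
    unfolding is_mechanism_def
  proof (intro conjI allI impI)
    fix c assume c: "valid_instance m n c"
    have g: "g0 m n (RR m n c) \<in> GG m n" using g0_prop[OF m] by blast
    show "is_allocation m n (A c)" unfolding A_def
      by (rule Al_alloc[OF m al RR_nn[OF c] g])
  next
    fix c c' :: "nat \<Rightarrow> nat \<Rightarrow> real" assume "\<forall>i\<in>{1..m}. \<forall>j\<in>{1..n}. c i j = c' i j"
    hence "RR m n c = RR m n c'" unfolding RR_def by (intro ext) auto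
    thus "\<forall>i\<in>{1..m}. A c i = A c' i \<and> p c i = p c' i" unfolding A_def p_def by simp
  qed
  have cef: "cyclic_envy_free m n \<alpha> A p"
    unfolding cyclic_envy_free_def
  proof (intro allI impI ballI)
    fix c i assume c: "valid_instance m n c" and i: "i \<in> {1..m}"
    have e: "\<alpha> * cost (RR m n c) i (A c i) - p c i
       \<le> cost (RR m n c) i (A c (pred_machine m i)) - p c (pred_machine m i)"
      unfolding A_def p_def by (rule envy_main[OF m al RR_nn[OF c] i])
    show "\<alpha> * cost c i (A c i) - p c i \<le> cost c i (A c (pred_machine m i)) - p c (pred_machine m i)"
      using e RR_cost[OF i Asub] by simp
  qed
  have geo: "(\<Sum>k<m. \<alpha>^k) \<le> 1 / \<epsilon>"
  proof -
    have "\<alpha> \<noteq> 1" using assms unfolding \<alpha>_def by simp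
    hence "(\<Sum>k<m. \<alpha>^k) = (1 - \<alpha>^m) / \<epsilon>" by (simp add: sum_gp_strict \<alpha>_def)
    also have "\<dots> \<le> 1 / \<epsilon>" using assms al by (intro divide_right_mono) auto
    finally show ?thesis .
  qed
  have bound: "makespan m c (A c) \<le> (1 / \<epsilon>) * OPT m n c" if c: "valid_instance m n c" for c
  proof -
    let ?c = "RR m n c"
    let ?g = "g0 m n ?c"
    let ?M = "makespan m ?c (alloc n ?g)"
    have g: "?g \<in> GG m n" using g0_prop[OF m] by blast
    have M0: "0 \<le> ?M" using makespan_nonneg[OF m al RR_nn[OF c] g] .
    have "makespan m c (A c) = makespan m ?c (A c)"
      by (rule makespan_cong) (use RR_cost Asub in simp)
    also have "\<dots> \<le> (\<Sum>k<m. \<alpha>^k) * ?M"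
      unfolding makespan_def[of m ?c "A c"]
      using machine_bound[OF m al RR_nn[OF c] g] m unfolding A_def
      by (subst Max_le_iff) auto
    also have "\<dots> \<le> (1/\<epsilon>) * ?M" using geo M0 by (rule mult_right_mono)
    also have "?M \<le> OPT m n c"
      unfolding OPT_def
    proof (rule cInf_greatest)
      define X0 where "X0 = (\<lambda>i::nat. if i = 1 then {1..n} else ({}::nat set))"
      have "is_allocation m n X0" unfolding is_allocation_def X0_def using m by auto
      thus "(\<lambda>X. makespan m c X) ` {X. is_allocation m n X} \<noteq> {}" by blast
    next
      fix x assume "x \<in> (\<lambda>X. makespan m c X) ` {X. is_allocation m n X}"
      then obtain X where X: "is_allocation m n X" "x = makespan m c X" by blast
      have "?M \<le> makespan m ?c X" by (rule g0_opt[OF m X(1)])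
      also have "makespan m ?c X = makespan m c X"
        by (rule makespan_cong) (use RR_cost alloc_sub[OF X(1)] in simp)
      finally show "?M \<le> x" using X by simp
    qed
    hence "(1/\<epsilon>) * ?M \<le> (1/\<epsilon>) * OPT m n c" using assms by (intro mult_left_mono) auto
    finally show ?thesis .
  qed
  show ?thesis
    using mech cef bound unfolding \<alpha>_def by blast
qed


end
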